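(* Let $G$ be a graph with maximum degree $\Delta \ge 24$. Then $$\chi_a(G) < \min\left\{\frac32\Delta^{\frac43} + 5\Delta - 14,\ \ \frac32\Delta^{\frac43} + \Delta + \frac{8\Delta^{\frac43}}{\Delta^{\frac23}-4} + 1\right\}.$$
   Context: An acyclic coloring of a graph is a proper vertex-coloring in which no cycle is bicolored (equivalently, the subgraph induced by any two color classes is a forest). $\chi_a(G)$, the acyclic chromatic number, is the minimum number of colors in an acyclic coloring of $G$. *)

theory Defs
  imports Complex_Main
begin

definition simple_graph :: "'a set \<Rightarrow> ('a \<Rightarrow> 'a \<Rightarrow> bool) \<Rightarrow> bool" where
  "simple_graph V E \<longleftrightarrow> finite V \<and> (\<forall>u v. E u v \<longrightarrow> u \<in> V \<and> v \<in> V)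
     \<and> (\<forall>u v. E u v \<longrightarrow> E v u) \<and> (\<forall>v. \<not> E v v)"

definition degree :: "'a set \<Rightarrow> ('a \<Rightarrow> 'a \<Rightarrow> bool) \<Rightarrow> 'a \<Rightarrow> nat" where
  "degree V E v = card {u \<in> V. E v u}"

definition max_degree :: "'a set \<Rightarrow> ('a \<Rightarrow> 'a \<Rightarrow> bool) \<Rightarrow> nat" where
  "max_degree V E = Max (degree V E ` V)"

definition is_cycle :: "'a set \<Rightarrow> ('a \<Rightarrow> 'a \<Rightarrow> bool) \<Rightarrow> 'a list \<Rightarrow> bool" where
  "is_cycle V E cs \<longleftrightarrow> length cs \<ge> 3 \<and> distinct cs \<and> set cs \<subseteq> V
     \<and> (\<forall>i < length cs - 1. E (cs ! i) (cs ! Suc i)) \<and> E (last cs) (hd cs)"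

definition proper_coloring :: "'a set \<Rightarrow> ('a \<Rightarrow> 'a \<Rightarrow> bool) \<Rightarrow> ('a \<Rightarrow> nat) \<Rightarrow> bool" where
  "proper_coloring V E c \<longleftrightarrow> (\<forall>u\<in>V. \<forall>v\<in>V. E u v \<longrightarrow> c u \<noteq> c v)"

definition acyclic_coloring :: "'a set \<Rightarrow> ('a \<Rightarrow> 'a \<Rightarrow> bool) \<Rightarrow> nat \<Rightarrow> ('a \<Rightarrow> nat) \<Rightarrow> bool" where
  "acyclic_coloring V E k c \<longleftrightarrow> (\<forall>v\<in>V. c v < k) \<and> proper_coloring V E c
     \<and> (\<forall>cs a b. is_cycle V E cs \<longrightarrow> \<not> (c ` set cs \<subseteq> {a, b}))"

definition acyclic_chromatic_number :: "'a set \<Rightarrow> ('a \<Rightarrow> 'a \<Rightarrow> bool) \<Rightarrow> nat" where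
  "acyclic_chromatic_number V E = (LEAST k. \<exists>c. acyclic_coloring V E k c)"

end

theory Submission
  imports Defs "HOL-Library.FuncSet"
begin

lemma two_col: "x \<in> {a,b} \<Longrightarrow> y \<in> {a,b} \<Longrightarrow> z \<in> {a,b} \<Longrightarrow> x \<noteq> y \<Longrightarrow> z \<noteq> y \<Longrightarrow> z = x"
  by auto

lemma mod_inj_aux: "(k + i) mod (n::nat) = (k + j) mod n \<Longrightarrow> i \<le> j \<Longrightarrow> j < n \<Longrightarrow> i = j"
proof -
  assume a: "(k + i) mod (n::nat) = (k + j) mod n" "i \<le> j" "j < n"
  hence "n dvd (k+j) - (k+i)" using mod_eq_dvd_iff_nat[of "k+i" "k+j" n] by simp
  hence "n dvd j - i" by simp
  moreover have "j - i < n" using a by simp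
  ultimately have "j - i = 0" using nat_dvd_not_less by blast
  thus ?thesis using a by simp
qed
lemma mod_inj: "(k + i) mod (n::nat) = (k + j) mod n \<Longrightarrow> i < n \<Longrightarrow> j < n \<Longrightarrow> i = j"
  by (metis mod_inj_aux nat_le_linear)

lemma cycle_alt:
  assumes cyc: "is_cycle W E cs" and vin: "v \<in> set cs"
    and prp: "\<forall>x\<in>W. \<forall>y\<in>W. E x y \<longrightarrow> \<psi> x \<noteq> \<psi> y" and col: "\<psi> ` set cs \<subseteq> {a,b}"
  shows "\<exists>p. length p + 1 = length cs \<and> odd (length p) \<and> distinct p \<and> v \<notin> set p \<and> set p \<subseteq> W
     \<and> (\<forall>j. Suc j < length p \<longrightarrow> E (p!j) (p!Suc j)) \<and> E v (p!0) \<and> E (p!(length p - 1)) v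
     \<and> (\<forall>i<length p. \<psi> (p!i) = \<psi> (p!(i mod 2))) \<and> \<psi> v = \<psi> (p!1)"
proof -
  define n where "n = length cs"
  have n3: "n \<ge> 3" and dist: "distinct cs" and sub: "set cs \<subseteq> W"
    and ch: "\<forall>i < n - 1. E (cs ! i) (cs ! Suc i)" and cl: "E (last cs) (hd cs)"
    using cyc by (auto simp: is_cycle_def n_def)
  have adj: "E (cs!i) (cs!((i+1) mod n))" if "i < n" for i
  proof (cases "i = n - 1")
    case True
    hence "(i+1) mod n = 0" using n3 by simp
    moreover have "last cs = cs!i" "hd cs = cs!0" using True n3 n_def
      by (metis One_nat_def last_conv_nth list.size(3) not_numeral_le_zero, metis hd_conv_nth list.size(3) not_numeral_le_zero)
    ultimately show ?thesis using cl by simp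
  next
    case False
    hence "(i+1) mod n = Suc i" using that by simp
    thus ?thesis using ch False that by simp
  qed
  obtain k where k: "k < n" "cs!k = v" using vin by (metis in_set_conv_nth n_def)
  define q where "q j = cs!((k+j) mod n)" for j
  have n0: "n > 0" using n3 by simp
  have q0: "q 0 = v" using k by (simp add: q_def)
  have qn: "q n = v" using k by (simp add: q_def)
  have qW: "q j \<in> W" for j using sub n0 by (auto simp: q_def n_def)
  have qc: "\<psi> (q j) \<in> {a,b}" for j
  proof -
    have "q j \<in> set cs" using n0 by (simp add: q_def n_def)
    thus ?thesis using col by blast
  qed
  have qadj: "E (q j) (q (Suc j))" for j
  proof -
    have "(k + Suc j) mod n = ((k+j) mod n + 1) mod n" by (simp add: mod_Suc_eq)
    thus ?thesis using adj[of "(k+j) mod n"] n0 by (simp add: q_def)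
  qed
  have qdiff: "\<psi> (q (Suc j)) \<noteq> \<psi> (q j)" for j using prp qW qadj by metis
  have alt: "\<psi> (q j) = \<psi> (q (j mod 2))" for j
  proof (induction j)
    case 0 then show ?case by simp
  next
    case (Suc j)
    show ?case
    proof (cases "even j")
      case True
      hence "Suc j mod 2 = 1" by presburger
      moreover have "\<psi> (q (Suc j)) = \<psi> (q 1)"
        using two_col[OF qc qc qc, of 1 0 "Suc j"] qdiff[of 0] qdiff[of j] Suc True
        by (simp add: even_iff_mod_2_eq_zero)
      ultimately show ?thesis by simp
    next
      case False
      hence "Suc j mod 2 = 0" by presburger
      moreover have "\<psi> (q (Suc j)) = \<psi> (q 0)"
      proof -
        have "j mod 2 = 1" using False by presburger
        thus ?thesis using two_col[OF qc qc qc, of 0 1 "Suc j"] qdiff[of 0] qdiff[of j] Suc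
          by (metis One_nat_def)
      qed
      ultimately show ?thesis by simp
    qed
  qed
  have neven: "even n"
  proof (rule ccontr)
    assume "odd n"
    hence "even (n-1)" using n0 by simp
    hence "\<psi> (q (n-1)) = \<psi> (q 0)" using alt[of "n-1"] by (simp add: even_iff_mod_2_eq_zero)
    moreover have "E (q (n-1)) (q n)" using qadj[of "n-1"] n0 by simp
    ultimately show False using qdiff[of "n-1"] n0 qn q0 by simp
  qed
  have qinj: "q i = q j \<Longrightarrow> i < n \<Longrightarrow> j < n \<Longrightarrow> i = j" for i j
    using dist n0 unfolding q_def n_def by (metis mod_inj nth_eq_iff_index_eq mod_less_divisor n_def)
  define p where "p = map (\<lambda>j. q (Suc j)) [0..<n-1]"
  have lp: "length p = n - 1" by (simp add: p_def)
  have pn: "i < n - 1 \<Longrightarrow> p!i = q (Suc i)" for i by (simp add: p_def)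
  have "length p + 1 = length cs" using lp n3 n_def by simp
  moreover have "odd (length p)" using lp neven n0 by simp
  moreover have "distinct p" unfolding p_def distinct_map using qinj
    by (auto simp: inj_on_def) (metis Suc_less_eq Suc_pred n0 nat.inject)
  moreover have "v \<notin> set p" using qinj q0 n0 by (auto simp: p_def) (metis Suc_pred less_Suc_eq_0_disj n0 nat.distinct(1) not_less_eq)
  moreover have "set p \<subseteq> W" using qW by (auto simp: p_def)
  moreover have "\<forall>j. Suc j < length p \<longrightarrow> E (p!j) (p!Suc j)" using qadj lp pn by simp
  moreover have "E v (p!0)" using pn[of 0] n3 qadj[of 0] q0 by simp
  moreover have "E (p!(length p - 1)) v" using pn[of "n-2"] n3 qadj[of "n-1"] qn lp
    by (simp add: Suc_diff_Suc numeral_2_eq_2)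
  moreover have "\<forall>i<length p. \<psi> (p!i) = \<psi> (p!(i mod 2))"
  proof (intro allI impI)
    fix i assume i: "i < length p"
    have "i mod 2 < length p" using i n3 lp by (metis le_less_trans mod_less_eq_dividend)
    hence "\<psi> (p!(i mod 2)) = \<psi> (q (Suc (i mod 2) mod 2))" using pn lp alt by simp
    also have "Suc (i mod 2) mod 2 = Suc i mod 2" by (simp add: mod_Suc_eq)
    finally show "\<psi> (p!i) = \<psi> (p!(i mod 2))" using pn i lp alt by simp
  qed
  moreover have "\<psi> v = \<psi> (p!1)" using pn[of 1] n3 alt[of 2] q0 by (simp add: numeral_2_eq_2)
  ultimately show ?thesis by blast
qed


locale acyc =
  fixes V :: "'a set" and E :: "'a \<Rightarrow> 'a \<Rightarrow> bool" and d :: nat and L :: nat and s :: real and \<beta> :: real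
  assumes G: "simple_graph V E"
    and deg: "\<And>v. v \<in> V \<Longrightarrow> card {u\<in>V. E v u} \<le> d"
    and s1: "s > 1" and bdef: "\<beta> = s*(s-1)/2"
    and bd: "\<beta> > real d"
    and Lbig: "real L \<ge> \<beta> + real d + (real d)^2/s + s*(real d)^4/(\<beta>*(\<beta>^2 - (real d)^2))"
begin

definition N where "N v = {u\<in>V. E v u}"
definition codeg where "codeg u w = card (N u \<inter> N w)"

definition good :: "'a set \<Rightarrow> ('a \<Rightarrow> nat) \<Rightarrow> bool" where
  "good S \<phi> \<longleftrightarrow> (\<forall>x\<in>S. \<forall>y\<in>S. E x y \<longrightarrow> \<phi> x \<noteq> \<phi> y)
     \<and> (\<forall>x\<in>S. \<forall>y\<in>S. x \<noteq> y \<longrightarrow> s \<le> real (codeg x y) \<longrightarrow> \<phi> x \<noteq> \<phi> y)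
     \<and> (\<forall>cs a b. is_cycle S E cs \<longrightarrow> \<not> \<phi> ` set cs \<subseteq> {a,b})"

definition C where "C S = {\<phi> \<in> S \<rightarrow>\<^sub>E {..<L}. good S \<phi>}"

lemma finV: "finite V" using G by (simp add: simple_graph_def)
lemma Esym: "E x y \<Longrightarrow> E y x" using G by (simp add: simple_graph_def)
lemma EV: "E x y \<Longrightarrow> x \<in> V \<and> y \<in> V" using G by (simp add: simple_graph_def)
lemma Eirr: "\<not> E x x" using G by (simp add: simple_graph_def)
lemma finN: "finite (N v)" using finV by (simp add: N_def)
lemma cardN: "v \<in> V \<Longrightarrow> card (N v) \<le> d" using deg by (simp add: N_def)
lemma codeg_sym: "codeg u w = codeg w u" by (simp add: codeg_def Int_commute)

lemma finC: "finite S \<Longrightarrow> finite (C S)"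
  unfolding C_def by (rule finite_subset[OF _ finite_PiE[of S "\<lambda>_. {..<L}"]]) auto

lemma is_cycle_mono: "is_cycle S E cs \<Longrightarrow> S \<subseteq> S' \<Longrightarrow> is_cycle S' E cs"
  by (auto simp: is_cycle_def)

lemma good_restrict: assumes "good S \<phi>" "S' \<subseteq> S" shows "good S' (restrict \<phi> S')"
proof -
  have "\<And>cs a b. is_cycle S' E cs \<Longrightarrow> \<not> restrict \<phi> S' ` set cs \<subseteq> {a,b}"
  proof
    fix cs a b assume c: "is_cycle S' E cs" "restrict \<phi> S' ` set cs \<subseteq> {a,b}"
    have "set cs \<subseteq> S'" using c(1) by (simp add: is_cycle_def)
    hence "\<phi> ` set cs \<subseteq> {a,b}" using c(2) by (auto simp: restrict_def)
    moreover have "is_cycle S E cs" using is_cycle_mono[OF c(1) assms(2)] .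
    ultimately show False using assms(1) by (auto simp: good_def)
  qed
  moreover have "\<forall>x\<in>S'. \<forall>y\<in>S'. E x y \<longrightarrow> restrict \<phi> S' x \<noteq> restrict \<phi> S' y"
    using assms unfolding good_def by (metis restrict_apply subsetD)
  moreover have "\<forall>x\<in>S'. \<forall>y\<in>S'. x \<noteq> y \<longrightarrow> s \<le> real (codeg x y) \<longrightarrow> restrict \<phi> S' x \<noteq> restrict \<phi> S' y"
    using assms unfolding good_def by (metis restrict_apply subsetD)
  ultimately show ?thesis unfolding good_def by blast
qed

lemma C_restrict: "\<phi> \<in> C S \<Longrightarrow> S' \<subseteq> S \<Longrightarrow> restrict \<phi> S' \<in> C S'"
  unfolding C_def using good_restrict by (auto simp: PiE_iff)

lemma C_empty: "C {} = {\<lambda>x. undefined}"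
  unfolding C_def good_def is_cycle_def by auto

lemma restr_inj:
  assumes X: "X \<subseteq> C S" and T: "T \<subseteq> S" and fin: "finite S"
    and g: "\<forall>x\<in>T. \<exists>y\<in>S - T. \<forall>\<phi>\<in>X. \<phi> x = \<phi> y"
  shows "card X \<le> card (C (S - T))"
proof -
  have "inj_on (\<lambda>\<phi>. restrict \<phi> (S - T)) X"
  proof (rule inj_onI)
    fix \<phi>1 \<phi>2 assume a: "\<phi>1 \<in> X" "\<phi>2 \<in> X" "restrict \<phi>1 (S - T) = restrict \<phi>2 (S - T)"
    have e: "\<phi>1 x = \<phi>2 x" if "x \<in> S - T" for x using a(3) that by (metis restrict_apply')
    show "\<phi>1 = \<phi>2"
    proof
      fix x
      show "\<phi>1 x = \<phi>2 x"
      proof (cases "x \<in> S")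
        case False
        have "\<phi>1 \<in> C S" "\<phi>2 \<in> C S" using a X by auto
        thus ?thesis using False by (auto simp: C_def PiE_iff extensional_def)
      next
        case True
        show ?thesis
        proof (cases "x \<in> T")
          case False thus ?thesis using e True by simp
        next
          case True
          then obtain y where "y \<in> S - T" "\<forall>\<phi>\<in>X. \<phi> x = \<phi> y" using g by blast
          thus ?thesis using e a by metis
        qed
      qed
    qed
  qed
  moreover have "(\<lambda>\<phi>. restrict \<phi> (S - T)) ` X \<subseteq> C (S - T)" using C_restrict X by blast
  moreover have "finite (C (S - T))" using finC fin by simp
  ultimately show ?thesis by (meson card_inj_on_le)
qed

definition Wk where "Wk v j = {q. length q = Suc j \<and> set q \<subseteq> V \<and> (\<forall>i. Suc i < length q \<longrightarrow> E (q!i) (q!Suc i)) \<and> E v (hd q)}"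

lemma Wk_bound: "finite (Wk v j) \<and> card (Wk v j) \<le> d ^ Suc j"
proof (induction j)
  case 0
  have "Wk v 0 = (\<lambda>u. [u]) ` N v"
  proof
    show "Wk v 0 \<subseteq> (\<lambda>u. [u]) ` N v"
    proof
      fix q assume "q \<in> Wk v 0"
      then obtain u where "q = [u]" "u \<in> V" "E v u" by (auto simp: Wk_def length_Suc_conv)
      thus "q \<in> (\<lambda>u. [u]) ` N v" by (auto simp: N_def)
    qed
  next
    show "(\<lambda>u. [u]) ` N v \<subseteq> Wk v 0" by (auto simp: Wk_def N_def)
  qed
  moreover have "card (N v) \<le> d"
  proof (cases "v \<in> V")
    case True thus ?thesis using cardN by simp
  next
    case False hence "N v = {}" using EV by (auto simp: N_def)
    thus ?thesis by simp
  qed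
  ultimately show ?case using finN by (metis card_image_le finite_imageI le_trans power_one_right One_nat_def)
next
  case (Suc j)
  define A where "A = Sigma (Wk v j) (\<lambda>q. N (last q))"
  have sub: "Wk v (Suc j) \<subseteq> (\<lambda>(q,y). q @ [y]) ` A"
  proof
    fix p assume p: "p \<in> Wk v (Suc j)"
    hence lp: "length p = Suc (Suc j)" by (simp add: Wk_def)
    hence pe: "p = butlast p @ [last p]" by (metis append_butlast_last_id list.size(3) nat.distinct(1))
    have lb: "length (butlast p) = Suc j" using lp by simp
    have nb: "butlast p ! i = p ! i" if "i < Suc j" for i using that lp by (simp add: nth_butlast)
    have "butlast p \<in> Wk v j"
    proof -
      have "set (butlast p) \<subseteq> V" using p by (auto simp: Wk_def dest: in_set_butlastD)
      moreover have "\<forall>i. Suc i < length (butlast p) \<longrightarrow> E (butlast p!i) (butlast p!Suc i)"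
        using p lb nb by (auto simp: Wk_def)
      moreover have "hd (butlast p) = hd p" using lp nb[of 0] lb by (metis hd_conv_nth list.size(3) nat.distinct(1) zero_less_Suc)
      ultimately show ?thesis using lb p by (auto simp: Wk_def)
    qed
    moreover have "last p \<in> N (last (butlast p))"
    proof -
      have "last (butlast p) = butlast p ! j" using lb by (metis diff_Suc_1 last_conv_nth list.size(3) nat.distinct(1))
      hence "last (butlast p) = p ! j" using nb by simp
      moreover have "last p = p ! Suc j" using lp by (metis diff_Suc_1 last_conv_nth list.size(3) nat.distinct(1))
      moreover have "E (p!j) (p!Suc j)" using p lp by (auto simp: Wk_def)
      ultimately show ?thesis using EV by (auto simp: N_def)
    qed
    ultimately show "p \<in> (\<lambda>(q,y). q @ [y]) ` A" unfolding A_def using pe by force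
  qed
  have finA: "finite A" unfolding A_def using Suc finN by auto
  have "card A = (\<Sum>q\<in>Wk v j. card (N (last q)))" unfolding A_def
    using Suc finN by (simp add: card_SigmaI)
  also have "\<dots> \<le> (\<Sum>q\<in>Wk v j. d)"
  proof (rule sum_mono)
    fix q assume "q \<in> Wk v j"
    hence "last q \<in> V" by (auto simp: Wk_def) (metis last_in_set list.size(3) nat.distinct(1) subsetD)
    thus "card (N (last q)) \<le> d" using cardN by simp
  qed
  also have "\<dots> \<le> d ^ Suc j * d" using Suc by simp
  finally have "card A \<le> d ^ Suc (Suc j)" by (simp add: mult.commute)
  moreover have "finite (Wk v (Suc j))" using sub finA finite_surj by blast
  moreover have "card (Wk v (Suc j)) \<le> card A" using sub finA
    by (meson card_image_le card_mono finite_imageI le_trans)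
  ultimately show ?case by simp
qed

lemma codeg_sum: assumes "v \<in> V" shows "(\<Sum>w\<in>V. codeg v w) \<le> d * d"
proof -
  have "(\<Sum>w\<in>V. codeg v w) = card (Sigma V (\<lambda>w. N v \<inter> N w))"
    using finV finN by (simp add: card_SigmaI codeg_def)
  also have "Sigma V (\<lambda>w. N v \<inter> N w) = prod.swap ` Sigma (N v) N"
    by (auto simp: N_def image_iff Esym)
  also have "card \<dots> = card (Sigma (N v) N)" by (simp add: card_image)
  also have "\<dots> = (\<Sum>u\<in>N v. card (N u))" using finN by (simp add: card_SigmaI)
  also have "\<dots> \<le> (\<Sum>u\<in>N v. d)" by (rule sum_mono) (auto simp: N_def deg)
  also have "\<dots> \<le> d * d" using cardN[OF assms] by simp
  finally show ?thesis .
qed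

lemma choose2_real: "real (k choose 2) * 2 = real k * (real k - 1)"
proof (cases k)
  case 0 thus ?thesis by simp
next
  case (Suc m)
  have "even (k * (k - 1))" by auto
  hence "real (k * (k - 1) div 2) = real (k * (k-1)) / 2" by (subst real_of_nat_div) auto
  thus ?thesis using Suc by (simp add: choose_two of_nat_diff algebra_simps)
qed

lemma geo_le: assumes "0 \<le> (x::real)" "x < 1" shows "(\<Sum>i<n. x^i) \<le> 1 / (1 - x)"
proof -
  have "(\<Sum>i<n. x^i) = (1 - x^n) / (1 - x)" using assms by (simp add: sum_gp_strict)
  also have "\<dots> \<le> 1 / (1 - x)" using assms by (simp add: divide_right_mono)
  finally show ?thesis .
qed

lemma step:
  assumes SV: "S \<subseteq> V" and vV: "v \<in> V" and vS: "v \<notin> S"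
    and dec: "\<And>T. T \<subseteq> S \<Longrightarrow> \<beta> ^ card T * real (card (C (S - T))) \<le> real (card (C S))"
  shows "\<beta> * real (card (C S)) \<le> real (card (C (insert v S)))"
proof -
  have finS: "finite S" using SV finV finite_subset by blast
  define CS where "CS = C S"
  have finCS: "finite CS" using finC finS by (simp add: CS_def)
  have b0: "\<beta> > 0" using bd of_nat_0_le_iff[of d] by linarith
  define Hi where "Hi = {w\<in>V. w \<noteq> v \<and> s \<le> real (codeg v w)}"
  define Lo where "Lo = {w\<in>V. w \<noteq> v \<and> real (codeg v w) < s}"
  define F where "F \<phi> = \<phi> ` (N v \<inter> S) \<union> \<phi> ` (Hi \<inter> S)" for \<phi> :: "'a \<Rightarrow> nat"
  define Gd where "Gd \<phi> = {c. c < L \<and> \<phi>(v:=c) \<in> C (insert v S)}" for \<phi> :: "'a \<Rightarrow> nat"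
  define Bd where "Bd \<phi> = {c. c < L \<and> c \<notin> F \<phi> \<and> \<phi>(v:=c) \<notin> C (insert v S)}" for \<phi> :: "'a \<Rightarrow> nat"
  define Pairs where "Pairs w = {P. P \<subseteq> N v \<inter> N w \<and> card P = 2}" for w
  define Z where "Z w P = (\<lambda>\<phi>. (\<phi>, \<phi> w)) ` {\<phi>\<in>CS. P \<subseteq> S \<and> (\<forall>x\<in>P. \<forall>y\<in>P. \<phi> x = \<phi> y)}" for w P
  define C4B where "C4B = (\<Union>w\<in>Lo. \<Union>P\<in>Pairs w. Z w P)"
  define Y where "Y p = (\<lambda>\<phi>. (\<phi>, \<phi> (p!1))) ` {\<phi>\<in>CS. set p \<subseteq> S \<and> distinct p \<and> (\<forall>i<length p. \<phi> (p!i) = \<phi> (p!(i mod 2)))}" for p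
  define Q where "Q j = {q\<in>Wk v (2*j+3). real (codeg v (last q)) < s}" for j
  define LB where "LB = (\<Union>j<card S. \<Union>q\<in>Q j. \<Union>y\<in>N v \<inter> N (last q). Y (q @ [y]))"
  define Qc where "Qc = s*(real d)^4/(\<beta>*(\<beta>^2 - (real d)^2))"
  have finL: "finite (Sigma CS Gd)" "finite (Sigma CS Bd)" using finCS by (auto simp: Gd_def Bd_def)
  have ext1: "card (Sigma CS Gd) \<le> card (C (insert v S))"
  proof -
    have "inj_on (\<lambda>(\<phi>,c). \<phi>(v:=c)) (Sigma CS Gd)"
    proof (rule inj_onI, clarify)
      fix \<phi>1 c1 \<phi>2 c2 assume a: "\<phi>1 \<in> CS" "c1 \<in> Gd \<phi>1" "\<phi>2 \<in> CS" "c2 \<in> Gd \<phi>2" "\<phi>1(v := c1) = \<phi>2(v := c2)"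
      have "c1 = c2" using a(5) by (metis fun_upd_same)
      moreover have "\<phi>1 v = \<phi>2 v" using a vS by (auto simp: CS_def C_def PiE_iff extensional_def)
      ultimately show "\<phi>1 = \<phi>2 \<and> c1 = c2" using a(5) by (metis fun_upd_triv fun_upd_upd)
    qed
    moreover have "(\<lambda>(\<phi>,c). \<phi>(v:=c)) ` (Sigma CS Gd) \<subseteq> C (insert v S)" by (auto simp: Gd_def)
    moreover have "finite (C (insert v S))" using finC finS by simp
    ultimately show ?thesis by (meson card_inj_on_le)
  qed
  have ext2: "card (Sigma CS Gd) = (\<Sum>\<phi>\<in>CS. card (Gd \<phi>))" using finCS by (simp add: Gd_def)
  have ext3: "card (Sigma CS Bd) = (\<Sum>\<phi>\<in>CS. card (Bd \<phi>))" using finCS by (simp add: Bd_def)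
  have per: "L \<le> d + card Hi + card (Bd \<phi>) + card (Gd \<phi>)" if "\<phi> \<in> CS" for \<phi>
  proof -
    have "{..<L} \<subseteq> F \<phi> \<union> Bd \<phi> \<union> Gd \<phi>" by (auto simp: Bd_def Gd_def)
    moreover have "finite (F \<phi> \<union> Bd \<phi> \<union> Gd \<phi>)"
      using finN finV by (auto simp: F_def Bd_def Gd_def Hi_def)
    ultimately have "L \<le> card (F \<phi> \<union> Bd \<phi> \<union> Gd \<phi>)"
      by (metis card_lessThan card_mono)
    also have "\<dots> \<le> card (F \<phi>) + card (Bd \<phi>) + card (Gd \<phi>)"
      by (meson card_Un_le add_le_mono le_refl le_trans)
    also have "card (F \<phi>) \<le> d + card Hi"
    proof -
      have "card (F \<phi>) \<le> card (\<phi> ` (N v \<inter> S)) + card (\<phi> ` (Hi \<inter> S))" unfolding F_def by (rule card_Un_le)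
      also have "card (\<phi> ` (N v \<inter> S)) \<le> d"
        using card_image_le[of "N v \<inter> S" \<phi>] card_mono[of "N v" "N v \<inter> S"] finN cardN[OF vV] by auto
      also have "card (\<phi> ` (Hi \<inter> S)) \<le> card Hi"
        using card_image_le[of "Hi \<inter> S" \<phi>] card_mono[of "Hi" "Hi \<inter> S"] finV by (auto simp: Hi_def)
      finally show ?thesis by simp
    qed
    finally show ?thesis by simp
  qed
  have cover: "Sigma CS Bd \<subseteq> C4B \<union> LB"
  proof
    fix z assume "z \<in> Sigma CS Bd"
    then obtain \<phi> c where z: "z = (\<phi>, c)" and \<phi>: "\<phi> \<in> CS" and c: "c \<in> Bd \<phi>" by auto
    define \<psi> where "\<psi> = \<phi>(v:=c)"
    have \<phi>C: "\<phi> \<in> S \<rightarrow>\<^sub>E {..<L}" "good S \<phi>" using \<phi> by (auto simp: CS_def C_def)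
    have cL: "c < L" "c \<notin> F \<phi>" "\<psi> \<notin> C (insert v S)" using c by (auto simp: Bd_def \<psi>_def)
    have \<psi>PiE: "\<psi> \<in> insert v S \<rightarrow>\<^sub>E {..<L}" using \<phi>C(1) cL(1) vS
      by (auto simp: \<psi>_def PiE_iff extensional_def)
    have \<psi>S: "\<psi> x = \<phi> x" if "x \<in> S" for x using that vS by (auto simp: \<psi>_def)
    have \<psi>v: "\<psi> v = c" by (simp add: \<psi>_def)
    have NF: "\<phi> y \<noteq> c" if "y \<in> S" "E v y" for y
      using cL(2) that SV EV by (auto simp: F_def N_def)
    have HF: "\<phi> y \<noteq> c" if "y \<in> S" "s \<le> real (codeg v y)" for y
      using cL(2) that SV vS by (auto simp: F_def Hi_def)
    have prp: "\<forall>x\<in>insert v S. \<forall>y\<in>insert v S. E x y \<longrightarrow> \<psi> x \<noteq> \<psi> y"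
    proof (intro ballI impI)
      fix x y assume xy: "x \<in> insert v S" "y \<in> insert v S" "E x y"
      show "\<psi> x \<noteq> \<psi> y"
      proof (cases "x = v")
        case True
        hence "y \<noteq> v" using xy Eirr by auto
        hence yS: "y \<in> S" using xy by auto
        hence "\<phi> y \<noteq> c" using NF xy True by simp
        thus ?thesis using True \<psi>S[OF yS] \<psi>v by simp
      next
        case False
        show ?thesis
        proof (cases "y = v")
          case True thus ?thesis using False xy NF \<psi>S \<psi>v Esym by (metis insertE)
        next
          case False2: False
          thus ?thesis using False xy \<phi>C(2) \<psi>S by (auto simp: good_def)
        qed
      qed
    qed
    have hig: "\<forall>x\<in>insert v S. \<forall>y\<in>insert v S. x \<noteq> y \<longrightarrow> s \<le> real (codeg x y) \<longrightarrow> \<psi> x \<noteq> \<psi> y"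
    proof (intro ballI impI)
      fix x y assume xy: "x \<in> insert v S" "y \<in> insert v S" "x \<noteq> y" "s \<le> real (codeg x y)"
      show "\<psi> x \<noteq> \<psi> y"
      proof (cases "x = v")
        case True
        hence yS: "y \<in> S" using xy by auto
        hence "\<phi> y \<noteq> c" using HF xy True by simp
        thus ?thesis using True \<psi>S[OF yS] \<psi>v by simp
      next
        case False
        show ?thesis
        proof (cases "y = v")
          case True thus ?thesis using False xy HF \<psi>S \<psi>v codeg_sym by (metis insertE)
        next
          case False2: False
          thus ?thesis using False xy \<phi>C(2) \<psi>S by (auto simp: good_def)
        qed
      qed
    qed
    obtain cs a b where cyc: "is_cycle (insert v S) E cs" "\<psi> ` set cs \<subseteq> {a,b}"
      using cL(3) \<psi>PiE prp hig unfolding C_def good_def by blast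
    have vcs: "v \<in> set cs"
    proof (rule ccontr)
      assume "v \<notin> set cs"
      hence sS: "set cs \<subseteq> S" using cyc(1) by (auto simp: is_cycle_def)
      hence "is_cycle S E cs" using cyc(1) by (auto simp: is_cycle_def)
      moreover have "\<phi> ` set cs \<subseteq> {a,b}"
      proof -
        have "\<phi> ` set cs = \<psi> ` set cs" using sS \<psi>S by (intro image_cong) auto
        thus ?thesis using cyc(2) by simp
      qed
      ultimately show False using \<phi>C(2) by (auto simp: good_def)
    qed
    obtain p where p: "length p + 1 = length cs" "odd (length p)" "distinct p" "v \<notin> set p"
      "set p \<subseteq> insert v S" "\<forall>j. Suc j < length p \<longrightarrow> E (p!j) (p!Suc j)" "E v (p!0)"
      "E (p!(length p - 1)) v" "\<forall>i<length p. \<psi> (p!i) = \<psi> (p!(i mod 2))" "\<psi> v = \<psi> (p!1)"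
      using cycle_alt[OF cyc(1) vcs prp cyc(2)] by blast
    define m where "m = length p"
    have modd: "odd m" using p(2) m_def by simp
    have "m \<ge> 2" using p(1) cyc(1) by (auto simp: is_cycle_def m_def)
    hence m3: "m \<ge> 3" using modd by (cases "m = 2") auto
    obtain k where mk: "m = 2*k+1" using modd oddE by blast
    have pS: "set p \<subseteq> S" using p(4,5) by auto
    have pn: "p!i \<in> S" if "i < m" for i using pS that m_def by auto
    have palt: "\<phi> (p!i) = \<phi> (p!(i mod 2))" if "i < m" for i
    proof -
      have "i mod 2 < m" using that m3 by (meson le_less_trans mod_less_eq_dividend)
      thus ?thesis using p(9) that pn \<psi>S m_def by metis
    qed
    have cp1: "c = \<phi> (p!1)" using p(10) \<psi>v \<psi>S pn[of 1] m3 by simp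
    have pv: "p!i \<noteq> v" if "i < m" for i using p(4) that m_def by auto
    have lo: "p!i \<in> Lo" if "i < m" "\<phi> (p!i) = c" for i
    proof -
      have "\<not> s \<le> real (codeg v (p!i))" using HF that pn by auto
      thus ?thesis using pn[OF that(1)] SV pv[OF that(1)] by (auto simp: Lo_def)
    qed
    have "(\<phi>, c) \<in> C4B \<union> LB"
    proof (cases "m = 3")
      case True
      define w where "w = p!1"
      define P where "P = {p!0, p!2}"
      have wLo: "w \<in> Lo" using lo[of 1] True cp1 unfolding w_def by simp
      have "p!0 \<noteq> p!2" using p(3) True m_def by (simp add: nth_eq_iff_index_eq)
      hence cP: "card P = 2" by (simp add: P_def)
      have "E (p!0) (p!1)" "E (p!1) (p!2)" using p(6) True m_def by (auto simp: numeral_2_eq_2)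
      moreover have "E (p!2) v" using p(8) True m_def by simp
      ultimately have e4: "E v (p!0)" "E w (p!0)" "E v (p!2)" "E w (p!2)" using p(7) Esym unfolding w_def by blast+
      hence "P \<subseteq> N v \<inter> N w" using EV unfolding P_def N_def by blast
      hence PP: "P \<in> Pairs w" using cP by (simp add: Pairs_def)
      have PS: "P \<subseteq> S" using pn[of 0] pn[of 2] True unfolding P_def by simp
      have e02: "\<phi> (p!2) = \<phi> (p!0)" using palt[of 2] True by simp
      have cst: "\<forall>x\<in>P. \<forall>y\<in>P. \<phi> x = \<phi> y" unfolding P_def using e02 by simp
      have m1: "\<phi> \<in> {\<phi>\<in>CS. P \<subseteq> S \<and> (\<forall>x\<in>P. \<forall>y\<in>P. \<phi> x = \<phi> y)}" using \<phi> PS cst by blast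
      have m2: "(\<phi>, c) = (\<lambda>\<phi>. (\<phi>, \<phi> w)) \<phi>" using cp1 unfolding w_def by simp
      have "(\<phi>, c) \<in> Z w P" unfolding Z_def using m1 m2 by (metis (no_types, lifting) image_eqI)
      thus ?thesis using wLo PP unfolding C4B_def by blast
    next
      case False
      hence m5: "m \<ge> 5" using m3 mk by auto
      define j where "j = (m - 5) div 2"
      have mj: "m = 2*j + 5" using m5 mk j_def by auto
      define q where "q = butlast p"
      define y where "y = last p"
      have "p \<noteq> []" using m5 m_def by auto
      hence pq: "p = q @ [y]" by (simp add: q_def y_def)
      have lq: "length q = Suc (2*j+3)" using mj m_def by (simp add: q_def)
      have qn: "q!i = p!i" if "i < m - 1" for i using that m_def by (simp add: q_def nth_butlast)
      have "q \<noteq> []" using lq by auto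
      hence "last q = q!(length q - 1)" by (simp add: last_conv_nth)
      hence lastq: "last q = p!(m-2)" using lq qn[of "m-2"] m5 mj by simp
      have "q \<in> Wk v (2*j+3)"
      proof -
        have "set q \<subseteq> V" using pS SV by (auto simp: q_def dest: in_set_butlastD)
        moreover have "\<forall>i. Suc i < length q \<longrightarrow> E (q!i) (q!Suc i)" using p(6) qn lq mj m_def by auto
        moreover have "hd q = p!0" using qn[of 0] \<open>q \<noteq> []\<close> m5 by (simp add: hd_conv_nth)
        ultimately show ?thesis using lq p(7) by (simp add: Wk_def)
      qed
      moreover have "real (codeg v (last q)) < s"
      proof -
        have "odd (m-2)" using mj by simp
        hence "(m-2) mod 2 = 1" using odd_iff_mod_2_eq_one by blast
        hence "\<phi> (p!(m-2)) = c" using palt[of "m-2"] m5 cp1 by simp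
        thus ?thesis using lo[of "m-2"] m5 lastq by (simp add: Lo_def)
      qed
      ultimately have qQ: "q \<in> Q j" by (simp add: Q_def)
      have yN: "y \<in> N v \<inter> N (last q)"
      proof -
        have yy: "y = p!(m-1)" using \<open>p \<noteq> []\<close> m_def by (simp add: y_def last_conv_nth)
        have e1: "E (p!(m-2)) (p!(m-1))"
        proof -
          have "Suc (m-2) = m-1" "Suc (m-2) < length p" using m5 m_def by auto
          thus ?thesis using p(6) by metis
        qed
        have e2: "E (p!(m-1)) v" using p(8) m_def by simp
        have "E v y" using Esym[OF e2] yy by simp
        moreover have "E (last q) y" using e1 yy lastq by simp
        ultimately have "E v y" "E (last q) y" by auto
        thus ?thesis using EV unfolding N_def by blast
      qed
      have jS: "j < card S"
      proof -
        have "m = card (set p)" using p(3) m_def by (simp add: distinct_card)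
        also have "\<dots> \<le> card S" using pS finS by (simp add: card_mono)
        finally show ?thesis using mj by simp
      qed
      have pa: "\<forall>i<length p. \<phi> (p!i) = \<phi> (p!(i mod 2))" using palt m_def by blast
      have m1: "\<phi> \<in> {\<phi>\<in>CS. set p \<subseteq> S \<and> distinct p \<and> (\<forall>i<length p. \<phi> (p!i) = \<phi> (p!(i mod 2)))}"
        using \<phi> pS p(3) pa by blast
      have m2: "(\<phi>, c) = (\<lambda>\<phi>. (\<phi>, \<phi> (p!1))) \<phi>" using cp1 by simp
      have "(\<phi>, c) \<in> Y (q @ [y])"
        unfolding Y_def pq[symmetric] using m1 m2 by (metis (no_types, lifting) image_eqI)
      thus ?thesis using jS qQ yN unfolding LB_def by blast
    qed
    thus "z \<in> C4B \<union> LB" using z by simp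
  qed
  have cardZ: "real (card (Z w P)) * \<beta> \<le> real (card CS)" if PPw: "P \<in> Pairs w" for w P
  proof -
    define X where "X = {\<phi>\<in>CS. P \<subseteq> S \<and> (\<forall>x\<in>P. \<forall>y\<in>P. \<phi> x = \<phi> y)}"
    have finX: "finite X" using finCS by (simp add: X_def)
    have "card (Z w P) \<le> card X" unfolding Z_def X_def[symmetric] using finX by (rule card_image_le)
    moreover have cX2: "real (card X) * \<beta> \<le> real (card CS)"
    proof (cases "P \<subseteq> S")
      case False
      hence "X = {}" by (simp add: X_def)
      thus ?thesis using b0 by simp
    next
      case True
      obtain x y where xy: "P = {x,y}" "x \<noteq> y" using PPw by (auto simp: Pairs_def card_2_iff)
      have xS: "{x} \<subseteq> S" "y \<in> S - {x}" using True xy by auto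
      have cX: "card X \<le> card (C (S - {x}))"
      proof (rule restr_inj[OF _ xS(1) finS])
        show "X \<subseteq> C S" by (auto simp: X_def CS_def)
        have "\<forall>\<phi>\<in>X. \<phi> x = \<phi> y" using xy unfolding X_def by blast
        thus "\<forall>x'\<in>{x}. \<exists>y'\<in>S - {x}. \<forall>\<phi>\<in>X. \<phi> x' = \<phi> y'" using xS(2) by blast
      qed
      have d1: "\<beta> * real (card (C (S - {x}))) \<le> real (card CS)"
        using dec[OF xS(1)] by (simp add: CS_def)
      have "real (card X) * \<beta> \<le> real (card (C (S - {x}))) * \<beta>"
        using cX b0 by (intro mult_right_mono) auto
      thus ?thesis using d1 by (simp add: mult.commute)
    qed
    ultimately have "card (Z w P) \<le> card X" by simp
    hence "real (card (Z w P)) * \<beta> \<le> real (card X) * \<beta>" using b0 by (intro mult_right_mono) auto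
    thus ?thesis using cX2 by linarith
  qed
  have cardY: "real (card (Y p)) * \<beta> ^ (2*j+3) \<le> real (card CS)" if lp: "length p = 2*j+5" for p j
  proof -
    define X where "X = {\<phi>\<in>CS. set p \<subseteq> S \<and> distinct p \<and> (\<forall>i<length p. \<phi> (p!i) = \<phi> (p!(i mod 2)))}"
    have finX: "finite X" using finCS by (simp add: X_def)
    have "card (Y p) \<le> card X" unfolding Y_def X_def[symmetric] using finX by (rule card_image_le)
    moreover have cX2: "real (card X) * \<beta> ^ (2*j+3) \<le> real (card CS)"
    proof (cases "set p \<subseteq> S \<and> distinct p")
      case False
      hence "X = {}" by (auto simp: X_def)
      thus ?thesis using b0 by simp
    next
      case True
      define T where "T = set (drop 2 p)"
      have TS: "T \<subseteq> S" using True by (auto simp: T_def dest: in_set_dropD)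
      have cT: "card T = 2*j+3" using True lp by (simp add: T_def distinct_card)
      have cX: "card X \<le> card (C (S - T))"
      proof (rule restr_inj[OF _ TS finS])
        show "X \<subseteq> C S" by (auto simp: X_def CS_def)
        show "\<forall>x\<in>T. \<exists>y\<in>S - T. \<forall>\<phi>\<in>X. \<phi> x = \<phi> y"
        proof
          fix x assume "x \<in> T"
          then obtain k where k0: "k < length (drop 2 p)" "drop 2 p ! k = x" unfolding T_def in_set_conv_nth by blast
          have k: "2 + k < length p" "x = p!(2+k)" using k0 lp by auto
          define y where "y = p!(k mod 2)"
          have km: "k mod 2 < length p" using lp by simp
          have yS: "y \<in> S" using True km unfolding y_def by (meson nth_mem subsetD)
          have yT: "y \<notin> T"
          proof
            assume "y \<in> T"
            then obtain k' where k0': "k' < length (drop 2 p)" "drop 2 p ! k' = y" unfolding T_def in_set_conv_nth by blast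
            have k': "2 + k' < length p" "y = p!(2+k')" using k0' lp by auto
            have "p!(k mod 2) = p!(2+k')" using k'(2) y_def by simp
            hence "k mod 2 = 2+k'" using nth_eq_iff_index_eq[OF conjunct2[OF True] km k'(1)] by blast
            thus False by simp
          qed
          have "\<forall>\<phi>\<in>X. \<phi> x = \<phi> y"
          proof
            fix \<phi> assume "\<phi> \<in> X"
            hence "\<forall>i<length p. \<phi> (p!i) = \<phi> (p!(i mod 2))" unfolding X_def by blast
            hence "\<phi> (p!(2+k)) = \<phi> (p!((2+k) mod 2))" using k(1) by blast
            thus "\<phi> x = \<phi> y" using k(2) by (simp add: y_def)
          qed
          thus "\<exists>y\<in>S - T. \<forall>\<phi>\<in>X. \<phi> x = \<phi> y" using yS yT by blast
        qed
      qed
      have d1: "\<beta> ^ (2*j+3) * real (card (C (S - T))) \<le> real (card CS)"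
        using dec[OF TS] cT by (simp add: CS_def)
      have "real (card X) * \<beta> ^ (2*j+3) \<le> real (card (C (S - T))) * \<beta> ^ (2*j+3)"
        using cX b0 by (intro mult_right_mono) auto
      thus ?thesis using d1 by (simp add: mult.commute)
    qed
    ultimately have "card (Y p) \<le> card X" by simp
    hence "real (card (Y p)) * \<beta> ^ (2*j+3) \<le> real (card X) * \<beta> ^ (2*j+3)" using b0 by (intro mult_right_mono) auto
    thus ?thesis using cX2 by linarith
  qed
  have finLo: "finite Lo" using finV by (simp add: Lo_def)
  have finHi: "finite Hi" using finV by (simp add: Hi_def)
  have finPairs: "finite (Pairs w)" for w
    unfolding Pairs_def by (rule finite_subset[of _ "Pow (N v \<inter> N w)"]) (auto simp: finN)
  have cardPairs: "card (Pairs w) = codeg v w choose 2" for w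
    unfolding Pairs_def codeg_def by (rule n_subsets) (simp add: finN)
  have finZ: "finite (Z w P)" for w P using finCS by (simp add: Z_def)
  have finQ: "finite (Q j)" for j using Wk_bound[of v "2*j+3"] by (simp add: Q_def)
  have finY: "finite (Y p)" for p using finCS by (simp add: Y_def)
  have finC4B: "finite C4B" unfolding C4B_def by (intro finite_UN_I finLo finPairs finZ)
  have finLB: "finite LB" unfolding LB_def by (intro finite_UN_I finite_lessThan finQ finY) (simp add: finN)
  have cardC4: "real (card C4B) \<le> (\<Sum>w\<in>Lo. real (codeg v w choose 2) / \<beta>) * real (card CS)"
  proof -
    have "card C4B \<le> (\<Sum>w\<in>Lo. card (\<Union>P\<in>Pairs w. Z w P))" unfolding C4B_def using finLo by (rule card_UN_le)
    also have "\<dots> \<le> (\<Sum>w\<in>Lo. \<Sum>P\<in>Pairs w. card (Z w P))" by (intro sum_mono card_UN_le finPairs)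
    finally have "real (card C4B) \<le> (\<Sum>w\<in>Lo. \<Sum>P\<in>Pairs w. real (card (Z w P)))"
      by (metis (mono_tags, lifting) of_nat_le_iff of_nat_sum sum.cong)
    also have "\<dots> \<le> (\<Sum>w\<in>Lo. \<Sum>P\<in>Pairs w. real (card CS) / \<beta>)"
    proof (intro sum_mono)
      fix w P assume "w \<in> Lo" "P \<in> Pairs w"
      thus "real (card (Z w P)) \<le> real (card CS) / \<beta>" using cardZ b0 by (simp add: pos_le_divide_eq)
    qed
    also have "\<dots> = (\<Sum>w\<in>Lo. real (codeg v w choose 2) / \<beta> * real (card CS))"
      by (simp add: cardPairs)
    also have "\<dots> = (\<Sum>w\<in>Lo. real (codeg v w choose 2) / \<beta>) * real (card CS)"
      by (simp add: sum_distrib_right)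
    finally show ?thesis .
  qed
  have cardLB: "real (card LB) \<le> (\<Sum>j<card S. real d ^ (2*j+4) * s / \<beta> ^ (2*j+3)) * real (card CS)"
  proof -
    have "card LB \<le> (\<Sum>j<card S. card (\<Union>q\<in>Q j. \<Union>y\<in>N v \<inter> N (last q). Y (q @ [y])))"
      unfolding LB_def by (rule card_UN_le) simp
    also have "\<dots> \<le> (\<Sum>j<card S. \<Sum>q\<in>Q j. card (\<Union>y\<in>N v \<inter> N (last q). Y (q @ [y])))"
      by (intro sum_mono card_UN_le finQ)
    also have "\<dots> \<le> (\<Sum>j<card S. \<Sum>q\<in>Q j. \<Sum>y\<in>N v \<inter> N (last q). card (Y (q @ [y])))"
      by (intro sum_mono card_UN_le) (simp add: finN)
    finally have "real (card LB) \<le> (\<Sum>j<card S. \<Sum>q\<in>Q j. \<Sum>y\<in>N v \<inter> N (last q). real (card (Y (q @ [y]))))"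
      by (metis (mono_tags, lifting) of_nat_le_iff of_nat_sum sum.cong)
    also have "\<dots> \<le> (\<Sum>j<card S. real d ^ (2*j+4) * s / \<beta> ^ (2*j+3) * real (card CS))"
    proof (rule sum_mono)
      fix j assume "j \<in> {..<card S}"
      define K where "K = real (card CS) / \<beta> ^ (2*j+3)"
      have K0: "K \<ge> 0" using b0 by (simp add: K_def)
      have "(\<Sum>q\<in>Q j. \<Sum>y\<in>N v \<inter> N (last q). real (card (Y (q @ [y])))) \<le> (\<Sum>q\<in>Q j. \<Sum>y\<in>N v \<inter> N (last q). K)"
      proof (intro sum_mono)
        fix q y assume q: "q \<in> Q j"
        hence "length (q @ [y]) = 2*j+5" by (simp add: Q_def Wk_def)
        thus "real (card (Y (q @ [y]))) \<le> K" using cardY b0 by (simp add: K_def pos_le_divide_eq)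
      qed
      also have "\<dots> = (\<Sum>q\<in>Q j. real (codeg v (last q)) * K)" by (simp add: codeg_def)
      also have "\<dots> \<le> (\<Sum>q\<in>Q j. s * K)"
        by (intro sum_mono mult_right_mono K0) (simp add: Q_def)
      also have "\<dots> = real (card (Q j)) * (s * K)" by simp
      also have "\<dots> \<le> real d ^ (2*j+4) * (s * K)"
      proof (rule mult_right_mono)
        have "card (Q j) \<le> card (Wk v (2*j+3))" using Wk_bound[of v "2*j+3"] by (intro card_mono) (auto simp: Q_def)
        also have "\<dots> \<le> d ^ (2*j+4)" using Wk_bound[of v "2*j+3"] by (simp add: add.commute)
        finally show "real (card (Q j)) \<le> real d ^ (2*j+4)" by (metis of_nat_le_iff of_nat_power)
        show "0 \<le> s * K" using s1 K0 by simp
      qed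
      also have "\<dots> = real d ^ (2*j+4) * s / \<beta> ^ (2*j+3) * real (card CS)" by (simp add: K_def)
      finally show "(\<Sum>q\<in>Q j. \<Sum>y\<in>N v \<inter> N (last q). real (card (Y (q @ [y])))) \<le> real d ^ (2*j+4) * s / \<beta> ^ (2*j+3) * real (card CS)" .
    qed
    also have "\<dots> = (\<Sum>j<card S. real d ^ (2*j+4) * s / \<beta> ^ (2*j+3)) * real (card CS)"
      by (simp add: sum_distrib_right)
    finally show ?thesis .
  qed
  have geo: "(\<Sum>j<card S. real d ^ (2*j+4) * s / \<beta> ^ (2*j+3)) \<le> Qc"
  proof -
    define r where "r = (real d)^2 / \<beta>^2"
    have r0: "0 \<le> r" "r < 1" using bd b0 by (auto simp: r_def power_strict_mono)
    have "(\<Sum>j<card S. real d ^ (2*j+4) * s / \<beta> ^ (2*j+3)) = (\<Sum>j<card S. (s * real d ^ 4 / \<beta> ^ 3) * r ^ j)"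
    proof (intro sum.cong refl)
      fix j
      have ps: "\<And>a::real. (a^j)^2 = (a^2)^j" by (simp add: power_mult[symmetric] mult.commute)
      show "real d ^ (2*j+4) * s / \<beta> ^ (2*j+3) = (s * real d ^ 4 / \<beta> ^ 3) * r ^ j"
        by (simp add: r_def power_add power_mult power_divide field_simps ps)
    qed
    also have "\<dots> = (s * real d ^ 4 / \<beta> ^ 3) * (\<Sum>j<card S. r ^ j)" by (simp add: sum_distrib_left)
    also have "\<dots> \<le> (s * real d ^ 4 / \<beta> ^ 3) * (1 / (1 - r))"
      by (intro mult_left_mono geo_le r0) (use s1 b0 in simp)
    also have "\<dots> = Qc"
    proof -
      define D2 where "D2 = \<beta>^2 - (real d)^2"
      have D2: "D2 > 0" using bd b0 by (simp add: D2_def power_strict_mono)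
      have "1 - r = D2 / \<beta>^2" using b0 by (simp add: r_def D2_def field_simps)
      hence "(s * real d ^ 4 / \<beta> ^ 3) * (1 / (1 - r)) = (s * real d ^ 4 / \<beta> ^ 3) * (\<beta>^2 / D2)" by simp
      also have "\<dots> = s * real d ^ 4 / (\<beta> * D2)" using b0 D2 by (simp add: field_simps power2_eq_square power3_eq_cube)
      finally show ?thesis by (simp add: Qc_def D2_def)
    qed
    finally show ?thesis .
  qed
  have hb: "real (card Hi) + (\<Sum>w\<in>Lo. real (codeg v w choose 2) / \<beta>) \<le> (real d)^2 / s"
  proof -
    have "real (card Hi) = (\<Sum>w\<in>Hi. 1)" by simp
    also have "\<dots> \<le> (\<Sum>w\<in>Hi. real (codeg v w) / s)"
      by (intro sum_mono) (use s1 in \<open>simp add: Hi_def pos_le_divide_eq\<close>)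
    finally have h1: "real (card Hi) \<le> (\<Sum>w\<in>Hi. real (codeg v w) / s)" .
    have h2: "(\<Sum>w\<in>Lo. real (codeg v w choose 2) / \<beta>) \<le> (\<Sum>w\<in>Lo. real (codeg v w) / s)"
    proof (intro sum_mono)
      fix w assume "w \<in> Lo"
      hence ks: "real (codeg v w) < s" by (simp add: Lo_def)
      define k where "k = real (codeg v w)"
      have k0: "k \<ge> 0" by (simp add: k_def)
      have "real (codeg v w choose 2) / \<beta> = (k / s) * ((k - 1) / (s - 1))"
        using choose2_real[of "codeg v w"] s1 by (simp add: bdef k_def field_simps)
      also have "\<dots> \<le> (k / s) * 1"
        using ks s1 k0 by (intro mult_left_mono) (auto simp: k_def)
      finally show "real (codeg v w choose 2) / \<beta> \<le> real (codeg v w) / s" by (simp add: k_def)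
    qed
    have "(\<Sum>w\<in>Hi. real (codeg v w) / s) + (\<Sum>w\<in>Lo. real (codeg v w) / s) = (\<Sum>w\<in>Hi \<union> Lo. real (codeg v w) / s)"
      by (rule sum.union_disjoint[symmetric]) (use finHi finLo in \<open>auto simp: Hi_def Lo_def\<close>)
    also have "\<dots> \<le> (\<Sum>w\<in>V. real (codeg v w) / s)"
      by (rule sum_mono2) (use finV s1 in \<open>auto simp: Hi_def Lo_def\<close>)
    also have "\<dots> = real (\<Sum>w\<in>V. codeg v w) / s" by (simp add: sum_divide_distrib)
    also have "\<dots> \<le> real (d * d) / s"
    proof -
      have "real (\<Sum>w\<in>V. codeg v w) \<le> real (d * d)" using codeg_sum[OF vV] by (rule of_nat_mono)
      thus ?thesis using s1 by (intro divide_right_mono) auto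
    qed
    also have "\<dots> = (real d)^2 / s" by (simp add: power2_eq_square)
    finally show ?thesis using h1 h2 by linarith
  qed
  have "(\<Sum>\<phi>\<in>CS. L) \<le> (\<Sum>\<phi>\<in>CS. d + card Hi + card (Bd \<phi>) + card (Gd \<phi>))"
    by (intro sum_mono per)
  also have "\<dots> = (d + card Hi) * card CS + card (Sigma CS Bd) + card (Sigma CS Gd)"
    by (simp add: ext2 ext3 sum.distrib)
  finally have totn: "card CS * L \<le> (d + card Hi) * card CS + card (Sigma CS Bd) + card (Sigma CS Gd)" by simp
  have "real (card CS * L) \<le> real ((d + card Hi) * card CS + card (Sigma CS Bd) + card (Sigma CS Gd))"
    using totn by (rule of_nat_mono)
  hence tot: "real L * real (card CS) \<le> (real d + real (card Hi)) * real (card CS) + real (card (Sigma CS Bd)) + real (card (Sigma CS Gd))"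
    by (simp add: algebra_simps)
  have "card (Sigma CS Bd) \<le> card (C4B \<union> LB)" using cover finC4B finLB by (intro card_mono) auto
  also have "\<dots> \<le> card C4B + card LB" by (rule card_Un_le)
  finally have "real (card (Sigma CS Bd)) \<le> real (card C4B + card LB)" by (rule of_nat_mono)
  hence bdb: "real (card (Sigma CS Bd)) \<le> real (card C4B) + real (card LB)" by simp
  define n where "n = real (card CS)"
  define A where "A = (\<Sum>w\<in>Lo. real (codeg v w choose 2) / \<beta>)"
  define B where "B = (\<Sum>j<card S. real d ^ (2*j+4) * s / \<beta> ^ (2*j+3))"
  have n0: "n \<ge> 0" by (simp add: n_def)
  have i1: "real L * n \<le> (real d + real (card Hi)) * n + A * n + B * n + real (card (Sigma CS Gd))"
    using tot bdb cardC4 cardLB unfolding n_def A_def B_def by linarith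
  have i2: "\<beta> \<le> real L - real d - real (card Hi) - A - B"
    using Lbig hb geo unfolding A_def B_def Qc_def by linarith
  have "\<beta> * n \<le> (real L - real d - real (card Hi) - A - B) * n" using i2 n0 by (rule mult_right_mono)
  also have "\<dots> \<le> real (card (Sigma CS Gd))" using i1 by (simp add: algebra_simps)
  also have "\<dots> \<le> real (card (C (insert v S)))" using ext1 by simp
  finally show ?thesis by (simp add: n_def CS_def)
qed


lemma dec_from:
  assumes H: "\<And>S' x. S' \<subseteq> V \<Longrightarrow> card S' < card S \<Longrightarrow> x \<in> V \<Longrightarrow> x \<notin> S' \<Longrightarrow> \<beta> * real (card (C S')) \<le> real (card (C (insert x S')))"
    and SV: "S \<subseteq> V" and TS: "T \<subseteq> S"
  shows "\<beta> ^ card T * real (card (C (S - T))) \<le> real (card (C S))"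
proof -
  have finS: "finite S" using SV finV finite_subset by blast
  have b0: "\<beta> > 0" using bd of_nat_0_le_iff[of d] by linarith
  have "finite T" using TS finS finite_subset by blast
  thus ?thesis using TS
  proof (induction T rule: finite_induct)
    case empty thus ?case by simp
  next
    case (insert x T)
    have xS: "x \<in> S" "T \<subseteq> S" using insert by auto
    define S' where "S' = S - insert x T"
    have S'V: "S' \<subseteq> V" using SV by (auto simp: S'_def)
    have cS': "card S' < card S" using xS finS unfolding S'_def by (intro psubset_card_mono) auto
    have ins: "insert x S' = S - T" using xS insert.hyps(2) by (auto simp: S'_def)
    have "\<beta> * real (card (C S')) \<le> real (card (C (S - T)))"
      using H[OF S'V cS', of x] xS SV ins by (auto simp: S'_def)
    hence "\<beta> ^ card T * (\<beta> * real (card (C S'))) \<le> \<beta> ^ card T * real (card (C (S - T)))"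
      using b0 by (intro mult_left_mono) auto
    also have "\<dots> \<le> real (card (C S))" using insert.IH xS(2) by simp
    finally show ?case using insert.hyps by (simp add: S'_def mult.assoc mult.left_commute)
  qed
qed

lemma stepall: "S \<subseteq> V \<Longrightarrow> v \<in> V \<Longrightarrow> v \<notin> S \<Longrightarrow> \<beta> * real (card (C S)) \<le> real (card (C (insert v S)))"
proof (induction "card S" arbitrary: S v rule: less_induct)
  case less
  show ?case
  proof (rule step[OF less.prems])
    fix T assume "T \<subseteq> S"
    thus "\<beta> ^ card T * real (card (C (S - T))) \<le> real (card (C S))"
      using dec_from[OF _ less.prems(1)] less.hyps by blast
  qed
qed

lemma exists_col: "\<exists>\<phi>. acyclic_coloring V E L \<phi>"
proof -
  have b0: "\<beta> > 0" using bd of_nat_0_le_iff[of d] by linarith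
  have "\<beta> ^ card V * real (card (C (V - V))) \<le> real (card (C V))"
    using dec_from[OF stepall] by blast
  hence "\<beta> ^ card V \<le> real (card (C V))" by (simp add: C_empty)
  moreover have "\<beta> ^ card V > 0" using b0 by simp
  ultimately have "card (C V) > 0" by linarith
  hence "C V \<noteq> {}" by auto
  then obtain \<phi> where \<phi>: "\<phi> \<in> C V" by blast
  hence "\<phi> \<in> V \<rightarrow>\<^sub>E {..<L}" "good V \<phi>" by (auto simp: C_def)
  hence "acyclic_coloring V E L \<phi>"
    unfolding acyclic_coloring_def proper_coloring_def good_def by (auto simp: PiE_iff)
  thus ?thesis by blast
qed

lemma chi_le: "acyclic_chromatic_number V E \<le> L"
proof -
  obtain \<phi> where "acyclic_coloring V E L \<phi>" using exists_col by blast
  hence "\<exists>c. acyclic_coloring V E L c" by blast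
  thus ?thesis unfolding acyclic_chromatic_number_def by (rule Least_le)
qed

end

lemma poly1: fixes x :: real assumes "x \<ge> 0" shows "4 * x^3 < ((x+1)*(x+2))^2"
proof -
  have "((x+1)*(x+2))^2 - 4*x^3 = x^4 + 2*x^3 + 13*x^2 + 12*x + 4"
    by (simp add: algebra_simps power2_eq_square power3_eq_cube power4_eq_xxxx)
  moreover have "x^4 \<ge> 0" "x^3 \<ge> 0" "x^2 \<ge> 0" using assms by auto
  ultimately show ?thesis using assms by linarith
qed

lemma poly2: fixes x :: real assumes "x \<ge> 0"
  shows "(x+2)*x^6 \<le> 8*x*(((x+1)*(x+2)/2) * (((x+1)*(x+2)/2)^2 - x^3))"
proof -
  have "8*x*(((x+1)*(x+2)/2) * (((x+1)*(x+2)/2)^2 - x^3)) - (x+2)*x^6 = x*(x+2)*(3*x^4+15*x^3+25*x^2+16*x+4)"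
    by (simp add: algebra_simps power2_eq_square power3_eq_cube power4_eq_xxxx field_simps)
       (simp add: algebra_simps numeral_eq_Suc)
  moreover have "x*(x+2)*(3*x^4+15*x^3+25*x^2+16*x+4) \<ge> 0" using assms by simp
  ultimately show ?thesis by linarith
qed

theorem theorem1:
  fixes V :: "'a set" and E :: "'a \<Rightarrow> 'a \<Rightarrow> bool"
  assumes "simple_graph V E"
    and "V \<noteq> {}"
    and "max_degree V E \<ge> 24"
  shows "real (acyclic_chromatic_number V E) <
    min (3/2 * real (max_degree V E) powr (4/3) + 5 * real (max_degree V E) - 14)
        (3/2 * real (max_degree V E) powr (4/3) + real (max_degree V E)
          + 8 * real (max_degree V E) powr (4/3) / (real (max_degree V E) powr (2/3) - 4) + 1)"
proof -
  define d where "d = max_degree V E"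
  define D where "D = real d"
  have D24: "D \<ge> 24" using assms(3) by (simp add: D_def d_def)
  define t where "t = D powr (1/3)"
  have t0: "t > 0" using D24 by (simp add: t_def)
  have tD: "t^3 = D"
  proof -
    have "t^3 = t powr (real 3)" using t0 by (simp add: powr_realpow)
    also have "\<dots> = D" using D24 by (simp add: t_def powr_powr)
    finally show ?thesis .
  qed
  have p43: "D powr (4/3) = t^4"
  proof -
    have "t^4 = t powr (real 4)" using t0 by (simp add: powr_realpow)
    also have "\<dots> = D powr (4/3)" using D24 by (simp add: t_def powr_powr)
    finally show ?thesis by simp
  qed
  have p23: "D powr (2/3) = t^2"
  proof -
    have "t^2 = t powr (real 2)" using t0 by (simp add: powr_realpow)
    also have "\<dots> = D powr (2/3)" using D24 by (simp add: t_def powr_powr)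
    finally show ?thesis by simp
  qed
  have t28: "t > 2.8"
  proof (rule ccontr)
    assume "\<not> t > 2.8"
    hence "t^3 \<le> 2.8^3" using t0 by (intro power_mono) auto
    moreover have "(2.8::real)^3 < 24" by (simp add: power3_eq_cube)
    ultimately show False using tD D24 by simp
  qed
  define x where "x = t^2"
  have "t*t > 2.8*2.8" using t28 by (intro mult_strict_mono) auto
  hence x0: "x > 7.84" by (simp add: x_def power2_eq_square)
  have Dx: "D = t * x" using tD by (simp add: x_def power3_eq_cube power2_eq_square)
  have "D^2 = (t^3)^2" using tD by simp
  also have "\<dots> = (t^2)^3" by (metis power_mult mult.commute)
  finally have D2: "D^2 = x^3" by (simp add: x_def)
  define s where "s = x + 2"
  define \<beta> where "\<beta> = s*(s-1)/2"
  have bx: "\<beta> = (x+1)*(x+2)/2" by (simp add: \<beta>_def s_def)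
  have "(x+1)*(x+2) > 0" using x0 by (intro mult_pos_pos) auto
  hence bpos: "\<beta> > 0" using bx by simp
  have bd2: "D^2 < \<beta>^2"
  proof -
    have "4 * x^3 < ((x+1)*(x+2))^2" using poly1 x0 by simp
    moreover have "\<beta>^2 = ((x+1)*(x+2))^2/4" by (simp add: bx power_divide)
    ultimately show ?thesis using D2 by linarith
  qed
  have bd: "\<beta> > D"
  proof -
    have "D \<ge> 0" using D24 by simp
    thus ?thesis using bd2 bpos by (meson power_less_imp_less_base less_imp_le)
  qed
  define Qc where "Qc = s*D^4/(\<beta>*(\<beta>^2 - D^2))"
  define y where "y = \<beta> + D + D^2/s + Qc"
  define L where "L = nat \<lceil>y\<rceil>"
  have "Qc \<ge> 0" unfolding Qc_def using bpos bd2 x0 D24 by (intro divide_nonneg_pos mult_nonneg_nonneg) (auto simp: s_def)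
  moreover have "D^2/s \<ge> 0" using x0 by (simp add: s_def)
  ultimately have y0: "y \<ge> 0" using bpos D24 unfolding y_def by linarith
  have Lc: "real L = real_of_int \<lceil>y\<rceil>" using y0 by (simp add: L_def)
  have Ly: "real L \<ge> y" "real L < y + 1" unfolding Lc by (simp_all add: ceiling_correct) linarith
  have deg: "card {u\<in>V. E v u} \<le> d" if "v \<in> V" for v
  proof -
    have "finite V" using assms(1) by (simp add: simple_graph_def)
    hence "degree V E v \<le> Max (degree V E ` V)" using that by (intro Max_ge) auto
    thus ?thesis by (simp add: degree_def max_degree_def d_def)
  qed
  interpret acyc V E d L s \<beta>
  proof
    show "simple_graph V E" by fact
    show "\<And>v. v \<in> V \<Longrightarrow> card {u\<in>V. E v u} \<le> d" by (rule deg)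
    show "s > 1" using x0 by (simp add: s_def)
    show "\<beta> = s*(s-1)/2" by (simp add: \<beta>_def)
    show "\<beta> > real d" using bd by (simp add: D_def)
    show "real L \<ge> \<beta> + real d + (real d)^2/s + s*(real d)^4/(\<beta>*(\<beta>^2 - (real d)^2))"
      using Ly by (simp add: y_def Qc_def D_def)
  qed
  have chi: "real (acyclic_chromatic_number V E) \<le> real L" using chi_le by simp
  have e1: "\<beta> + D^2/s \<le> 3/2*x^2 - x/2 + 5"
  proof -
    have "D^2/s = x^3/(x+2)" using D2 by (simp add: s_def)
    also have "\<dots> = x^2 - 2*x + 4 - 8/(x+2)" using x0 by (simp add: field_simps power2_eq_square power3_eq_cube)
    finally have "D^2/s = x^2 - 2*x + 4 - 8/(x+2)" .
    moreover have "8/(x+2) \<ge> 0" using x0 by simp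
    moreover have "\<beta> = x^2/2 + 3*x/2 + 1" by (simp add: bx field_simps power2_eq_square)
    ultimately show ?thesis by linarith
  qed
  have e2: "Qc \<le> 8*x"
  proof -
    have den: "\<beta>*(\<beta>^2 - D^2) > 0" using bpos bd2 by simp
    have "D^4 = D^2 * D^2" by (simp add: power4_eq_xxxx power2_eq_square)
    also have "\<dots> = x^3 * x^3" using D2 by simp
    also have "\<dots> = x^6" by (simp flip: power_add)
    finally have D4: "D^4 = x^6" .
    have "s*D^4 = (x+2)*x^6" using D4 by (simp add: s_def)
    also have "\<dots> \<le> 8*x*(\<beta>*(\<beta>^2 - D^2))" unfolding bx D2 using x0 poly2[of x] by simp
    finally show ?thesis using den by (simp add: Qc_def pos_divide_le_eq)
  qed
  have ybound: "y + 1 \<le> 3/2*x^2 + 15/2*x + 6 + D" using e1 e2 unfolding y_def by linarith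
  have x4: "D powr (4/3) = x^2"
  proof -
    have "t^4 = t^2 * t^2" by (simp add: power4_eq_xxxx power2_eq_square)
    thus ?thesis using p43 by (simp add: x_def power2_eq_square)
  qed
  have b1: "y + 1 < 3/2 * D powr (4/3) + 5 * D - 14"
  proof -
    have "4*D = 4*(t*x)" using Dx by simp
    moreover have "t*x \<ge> 2.8*x" using t28 x0 by (intro mult_right_mono) auto
    ultimately have "4*D \<ge> 11.2*x" by linarith
    moreover have "x > 7" using x0 by simp
    ultimately show ?thesis using ybound x4 by linarith
  qed
  have b2: "y + 1 < 3/2 * D powr (4/3) + D + 8 * D powr (4/3) / (D powr (2/3) - 4) + 1"
  proof -
    have x2: "D powr (2/3) = x" using p23 by (simp add: x_def)
    have "(8*x + 32) * (x - 4) \<le> 8*x^2" by (simp add: algebra_simps power2_eq_square)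
    hence "8*x + 32 \<le> 8*x^2/(x - 4)" using x0 by (simp add: pos_le_divide_eq)
    moreover have "x > 7" using x0 by simp
    ultimately show ?thesis unfolding x4 x2 using ybound by linarith
  qed
  have fin: "real (acyclic_chromatic_number V E) < 3/2 * D powr (4/3) + 5 * D - 14"
    "real (acyclic_chromatic_number V E) < 3/2 * D powr (4/3) + D + 8 * D powr (4/3) / (D powr (2/3) - 4) + 1"
    using chi Ly b1 b2 by linarith+
  show ?thesis unfolding d_def[symmetric] D_def[symmetric] using fin by simp
qed


end
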